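(* Let $n\ge 2$, $m\ge 1$, $k\in\{1,\dots,n-1\}$, $h\in\mathbb{R}$, $W\in\mathbb{R}^{m\times(n-1)}$, $w\in\mathbb{R}^m$, $b\in\mathbb{R}^m$, and let $\sigma:\mathbb{R}\to\mathbb{R}$ be differentiable, with $\underline{\sigma}(x)=(\sigma(x_1),\dots,\sigma(x_m))^T$ for $x\in\mathbb{R}^m$. For $y=(y_1,\dots,y_n)^T\in\mathbb{R}^n$ and $j\in\{1,\dots,n\}$ let $\hat{y}^j=(y_1,\dots,y_{j-1},y_{j+1},\dots,y_n)^T\in\mathbb{R}^{n-1}$, and let $\hat{W}^k=(W_{1k},\dots,W_{mk})^T\in\mathbb{R}^m$ be the $k$-th column of $W$. Define maps $\mathcal{V}_{k,Up}^h,\mathcal{V}_{k,Low}^h:\mathbb{R}^n\to\mathbb{R}^n$ as follows: $Y=\mathcal{V}_{k,Up}^h(y)$ is given by $$Y_k = y_k + h\,(\hat{W}^k)^T\,\mathrm{diag}(w)\,\underline{\sigma}(W\hat{y}^k+b),\qquad Y_i=y_i\ \ (i\neq k),$$ and $Y=\mathcal{V}_{k,Low}^h(y)$ is given by $$Y_{k+1} = y_{k+1} - h\,(\hat{W}^k)^T\,\mathrm{diag}(w)\,\underline{\sigma}(W\hat{y}^{k+1}+b),\qquad Y_i=y_i\ \ (i\neq k+1).$$ Then each of $\mathcal{V}_{k,Up}^h$ and $\mathcal{V}_{k,Low}^h$ is symplectic with respect to the variable pair $(y_k,y_{k+1})$, i.e. for every $y\in\mathbb{R}^n$ the $2\times 2$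 Jacobian matrix $M=\frac{\partial (Y_k,Y_{k+1})}{\partial (y_k,y_{k+1})}(y)$ satisfies $M^T \begin{pmatrix}0&-1\\1&0\end{pmatrix} M=\begin{pmatrix}0&-1\\1&0\end{pmatrix}$, and each map is phase volume-preserving, i.e. $\det\left(\frac{\partial Y}{\partial y}(y)\right)=1$ for all $y\in\mathbb{R}^n$.
   Context: $\mathrm{diag}(w)$ denotes the $m\times m$ diagonal matrix with the entries of $w$ on its diagonal. These maps are the "locally-symplectic modules" (Up and Low modules for the variable pair $(y_k,y_{k+1})$). *)

theory Defs
  imports Complex_Main "Jordan_Normal_Form.Determinant"
begin

text \<open>Vectors/matrices are Jordan_Normal_Form vectors/matrices (0-based internally).
  Paper indices are 1-based: paper coordinate y_j is  y $ (j - 1).\<close>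

definition diagv :: "real vec \<Rightarrow> real mat" where
  "diagv w = mat (dim_vec w) (dim_vec w) (\<lambda>(i,j). if i = j then w $ i else 0)"

text \<open>hat y j: remove the j-th (1-based) coordinate.\<close>
definition hatv :: "real vec \<Rightarrow> nat \<Rightarrow> real vec" where
  "hatv y j = vec (dim_vec y - 1) (\<lambda>i. if i < j - 1 then y $ i else y $ (i + 1))"

definition sigvec :: "(real \<Rightarrow> real) \<Rightarrow> real vec \<Rightarrow> real vec" where
  "sigvec \<sigma> x = map_vec \<sigma> x"

definition layer_term ::
  "real mat \<Rightarrow> real vec \<Rightarrow> real vec \<Rightarrow> (real \<Rightarrow> real) \<Rightarrow> nat \<Rightarrow> nat \<Rightarrow> real vec \<Rightarrow> real" where
  "layer_term W w b \<sigma> k j y = col W (k - 1) \<bullet> (diagv w *\<^sub>v sigvec \<sigma> (W *\<^sub>v hatv y j + b))"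

definition V_up ::
  "real \<Rightarrow> real mat \<Rightarrow> real vec \<Rightarrow> real vec \<Rightarrow> (real \<Rightarrow> real) \<Rightarrow> nat \<Rightarrow> real vec \<Rightarrow> real vec" where
  "V_up h W w b \<sigma> k y = vec (dim_vec y)
     (\<lambda>i. if i = k - 1 then y $ i + h * layer_term W w b \<sigma> k k y else y $ i)"

definition V_low ::
  "real \<Rightarrow> real mat \<Rightarrow> real vec \<Rightarrow> real vec \<Rightarrow> (real \<Rightarrow> real) \<Rightarrow> nat \<Rightarrow> real vec \<Rightarrow> real vec" where
  "V_low h W w b \<sigma> k y = vec (dim_vec y)
     (\<lambda>i. if i = k then y $ i - h * layer_term W w b \<sigma> k (k + 1) y else y $ i)"

definition updv :: "real vec \<Rightarrow> nat \<Rightarrow> real \<Rightarrow> real vec" where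
  "updv y j t = vec (dim_vec y) (\<lambda>i. if i = j then t else y $ i)"

definition pderiv_at :: "(real vec \<Rightarrow> real vec) \<Rightarrow> real vec \<Rightarrow> nat \<Rightarrow> nat \<Rightarrow> real" where
  "pderiv_at F y i j = (THE D. ((\<lambda>t. F (updv y j t) $ i) has_real_derivative D) (at (y $ j)))"

definition partials_exist :: "(real vec \<Rightarrow> real vec) \<Rightarrow> nat \<Rightarrow> real vec \<Rightarrow> bool" where
  "partials_exist F n y \<longleftrightarrow>
     (\<forall>i<n. \<forall>j<n. (\<lambda>t. F (updv y j t) $ i) differentiable (at (y $ j)))"

definition jacobian :: "(real vec \<Rightarrow> real vec) \<Rightarrow> nat \<Rightarrow> real vec \<Rightarrow> real mat" where
  "jacobian F n y = mat n n (\<lambda>(i,j). pderiv_at F y i j)"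

definition jac_pair :: "(real vec \<Rightarrow> real vec) \<Rightarrow> nat \<Rightarrow> real vec \<Rightarrow> real mat" where
  "jac_pair F k y = mat 2 2 (\<lambda>(i,j). pderiv_at F y (k - 1 + i) (k - 1 + j))"

definition Jsymp :: "real mat" where
  "Jsymp = mat_of_rows_list 2 [[0, -1], [1, 0]]"

definition symplectic_pair :: "(real vec \<Rightarrow> real vec) \<Rightarrow> nat \<Rightarrow> real vec \<Rightarrow> bool" where
  "symplectic_pair F k y \<longleftrightarrow> transpose_mat (jac_pair F k y) * Jsymp * jac_pair F k y = Jsymp"

end

theory Submission
  imports Defs
begin

lemma det_unitrows:
  fixes A :: "real mat"
  assumes A: "A \<in> carrier_mat n n" and r: "r < n"
    and rows: "\<And>i j. i < n \<Longrightarrow> j < n \<Longrightarrow> i \<noteq> r \<Longrightarrow> A $$ (i,j) = (if i = j then 1 else 0)"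
    and d: "A $$ (r,r) = 1"
  shows "det A = 1"
proof -
  have "det A = (\<Sum>i<n. A $$ (i,r) * cofactor A i r)"
    by (rule laplace_expansion_column[OF A r])
  also have "\<dots> = A $$ (r,r) * cofactor A r r + (\<Sum>i\<in>{..<n}-{r}. A $$ (i,r) * cofactor A i r)"
    using r by (simp add: sum.remove)
  also have "(\<Sum>i\<in>{..<n}-{r}. A $$ (i,r) * cofactor A i r) = 0"
    by (rule sum.neutral) (auto simp: rows r)
  finally have e: "det A = A $$ (r,r) * cofactor A r r" by simp
  have "mat_delete A r r = 1\<^sub>m (n - 1)"
    using A r by (auto simp: mat_delete_def rows)
  then show ?thesis using e by (simp add: d cofactor_def)
qed

lemma symp2:
  fixes M :: "real mat"
  assumes M: "M \<in> carrier_mat 2 2" and d: "M $$ (0,0) * M $$ (1,1) - M $$ (0,1) * M $$ (1,0) = 1"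
  shows "transpose_mat M * Jsymp * M = Jsymp"
proof -
  have J: "Jsymp \<in> carrier_mat 2 2" "Jsymp $$ (0,0) = 0" "Jsymp $$ (0,1) = -1"
     "Jsymp $$ (1,0) = 1" "Jsymp $$ (1,1) = 0"
    by (auto simp: Jsymp_def mat_of_rows_list_def)
  have s2': "\<And>f. (\<Sum>i\<in>{0..<2::nat}. f i) = f 0 + (f 1::real)" by (simp add: numeral_2_eq_2)
  show ?thesis
    apply (rule eq_matI)
    using M J d
    apply (auto simp: less_2_cases_iff scalar_prod_def s2' algebra_simps)
    done
qed

lemma diff_if:
  "(c \<Longrightarrow> f differentiable F) \<Longrightarrow> (\<not> c \<Longrightarrow> g differentiable F) \<Longrightarrow>
    (\<lambda>t. if c then f t else g t) differentiable F"
  by (cases c) auto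

lemma layer_diff:
  assumes y: "y \<in> carrier_vec n" and W: "W \<in> carrier_mat m (n - 1)"
    and w: "w \<in> carrier_vec m" and b: "b \<in> carrier_vec m"
    and sd: "\<And>x. \<sigma> differentiable (at x)" and j': "j' < n"
  shows "(\<lambda>t. layer_term W w b \<sigma> k j (updv y j' t)) differentiable (at x)"
  using y W w b
  apply (simp add: layer_term_def scalar_prod_def diagv_def sigvec_def hatv_def updv_def)
  apply (intro differentiable_sum ballI finite_atLeastLessThan differentiable_mult differentiable_const
     differentiable_compose[OF sd] differentiable_add diff_if differentiable_ident)
  apply (auto intro!: diff_if)
  done

lemma the_deriv:
  "(f has_real_derivative D) (at x) \<Longrightarrow> (THE D. (f has_real_derivative D) (at x)) = D"
  by (blast intro: the_equality DERIV_unique)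

lemma generic:
  fixes G :: "real vec \<Rightarrow> real"
  assumes F: "F = (\<lambda>y. vec (dim_vec y) (\<lambda>i. if i = r then y $ i + G y else y $ i))"
    and y: "y \<in> carrier_vec n" and r: "r < n"
    and inv: "\<And>t. G (updv y r t) = G y"
    and diff: "\<And>j x. j < n \<Longrightarrow> (\<lambda>t. G (updv y j t)) differentiable (at x)"
  shows "partials_exist F n y"
    and "\<And>i j. i < n \<Longrightarrow> j < n \<Longrightarrow> i \<noteq> r \<Longrightarrow> pderiv_at F y i j = (if i = j then 1 else 0)"
    and "pderiv_at F y r r = 1"
    and "det (jacobian F n y) = 1"
proof -
  have ev: "F (updv y j t) $ i = (if i = r then (if i = j then t else y $ i) + G (updv y j t)
      else (if i = j then t else y $ i))" if "i < n" for i j t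
    using that y by (simp add: F updv_def)
  show pe: "partials_exist F n y"
    unfolding partials_exist_def
  proof (intro allI impI)
    fix i j assume i: "i < n" and j: "j < n"
    show "(\<lambda>t. F (updv y j t) $ i) differentiable at (y $ j)"
      unfolding ev[OF i] using diff[OF j] inv
      by (cases "i = r"; cases "i = j") auto
  qed
  show pd: "pderiv_at F y i j = (if i = j then 1 else 0)" if i: "i < n" and j: "j < n" and ir: "i \<noteq> r" for i j
  proof -
    have "((\<lambda>t. F (updv y j t) $ i) has_real_derivative (if i = j then 1 else 0)) (at (y $ j))"
      unfolding ev[OF i] using ir by (cases "i = j") (auto intro!: derivative_eq_intros)
    then show ?thesis unfolding pderiv_at_def by (rule the_deriv)
  qed
  show pr: "pderiv_at F y r r = 1"
  proof -
    have "((\<lambda>t. F (updv y r t) $ r) has_real_derivative 1) (at (y $ r))"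
      unfolding ev[OF r] inv by (auto intro!: derivative_eq_intros)
    then show ?thesis unfolding pderiv_at_def by (rule the_deriv)
  qed
  show "det (jacobian F n y) = 1"
    by (rule det_unitrows[where r=r]) (auto simp: jacobian_def r pd pr)
qed

lemma hat_upd: "y \<in> carrier_vec n \<Longrightarrow> 1 \<le> j \<Longrightarrow> hatv (updv y (j - 1) t) j = hatv y j"
  by (rule eq_vecI) (auto simp: hatv_def updv_def)

theorem mainTheorem1:
  fixes n m k :: nat and h :: real and W :: "real mat" and w b :: "real vec"
    and \<sigma> :: "real \<Rightarrow> real"
  assumes "n \<ge> 2" and "m \<ge> 1" and "1 \<le> k" and "k \<le> n - 1"
    and "W \<in> carrier_mat m (n - 1)" and "w \<in> carrier_vec m" and "b \<in> carrier_vec m"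
    and "\<And>x. \<sigma> differentiable (at x)"
  shows "\<forall>y \<in> carrier_vec n.
           partials_exist (V_up h W w b \<sigma> k) n y
         \<and> symplectic_pair (V_up h W w b \<sigma> k) k y
         \<and> det (jacobian (V_up h W w b \<sigma> k) n y) = 1
         \<and> partials_exist (V_low h W w b \<sigma> k) n y
         \<and> symplectic_pair (V_low h W w b \<sigma> k) k y
         \<and> det (jacobian (V_low h W w b \<sigma> k) n y) = 1"
proof
  fix y :: "real vec" assume y: "y \<in> carrier_vec n"
  have kn: "k < n" using assms by auto
  have k1: "k - 1 < n" "k - 1 + 1 = k" "k - 1 \<noteq> k" "Suc (k - Suc 0) = k" using assms by auto
  have ld: "(\<lambda>t. layer_term W w b \<sigma> k j (updv y j' t)) differentiable (at x)" if "j' < n" for j j' x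
    by (rule layer_diff[OF y assms(5-8) that])
  have ldc: "(\<lambda>t. c * layer_term W w b \<sigma> k j (updv y j' t)) differentiable (at x)" if "j' < n" for c j j' x
    by (intro differentiable_mult differentiable_const ld that)
  note U = generic[where F="V_up h W w b \<sigma> k" and r="k - 1" and G="\<lambda>y. h * layer_term W w b \<sigma> k k y",
      OF _ y k1(1)]
  have Ueq: "V_up h W w b \<sigma> k = (\<lambda>y. vec (dim_vec y) (\<lambda>i. if i = k - 1 then y $ i + h * layer_term W w b \<sigma> k k y else y $ i))"
    by (rule ext) (simp add: V_up_def)
  have Uinv: "h * layer_term W w b \<sigma> k k (updv y (k - 1) t) = h * layer_term W w b \<sigma> k k y" for t
    using hat_upd[OF y assms(3)] by (simp add: layer_term_def)
  note U = U[OF Ueq Uinv ldc]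
  note L = generic[where F="V_low h W w b \<sigma> k" and r="k" and G="\<lambda>y. - h * layer_term W w b \<sigma> k (k + 1) y",
      OF _ y kn]
  have Leq: "V_low h W w b \<sigma> k = (\<lambda>y. vec (dim_vec y) (\<lambda>i. if i = k then y $ i + - h * layer_term W w b \<sigma> k (k + 1) y else y $ i))"
    by (rule ext) (simp add: V_low_def cong: if_cong)
  have Linv: "- h * layer_term W w b \<sigma> k (k + 1) (updv y k t) = - h * layer_term W w b \<sigma> k (k + 1) y" for t
    using hat_upd[OF y, of "k + 1" t] by (simp add: layer_term_def)
  note L = L[OF Leq Linv ldc]
  have Us: "symplectic_pair (V_up h W w b \<sigma> k) k y"
    unfolding symplectic_pair_def
  proof (rule symp2)
    have u1: "pderiv_at (V_up h W w b \<sigma> k) y (k - Suc 0) (k - Suc 0) = 1" using U(3) by simp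
    have u2: "pderiv_at (V_up h W w b \<sigma> k) y k k = 1" using U(2)[of k k] kn k1 by simp
    have u3: "pderiv_at (V_up h W w b \<sigma> k) y k (k - Suc 0) = 0" using U(2)[of k "k - 1"] kn k1 by simp
    show "jac_pair (V_up h W w b \<sigma> k) k y \<in> carrier_mat 2 2" by (simp add: jac_pair_def)
    show "jac_pair (V_up h W w b \<sigma> k) k y $$ (0, 0) * jac_pair (V_up h W w b \<sigma> k) k y $$ (1, 1) -
    jac_pair (V_up h W w b \<sigma> k) k y $$ (0, 1) * jac_pair (V_up h W w b \<sigma> k) k y $$ (1, 0) = 1"
      by (simp add: jac_pair_def u1 u2 u3 k1)
  qed
  have Ls: "symplectic_pair (V_low h W w b \<sigma> k) k y"
  proof -
    have l1: "pderiv_at (V_low h W w b \<sigma> k) y (k - Suc 0) (k - Suc 0) = 1" using L(2)[of "k - 1" "k - 1"] kn k1 by simp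
    have l2: "pderiv_at (V_low h W w b \<sigma> k) y (k - Suc 0) k = 0" using L(2)[of "k - 1" k] kn k1 by simp
    show ?thesis unfolding symplectic_pair_def by (rule symp2) (auto simp: jac_pair_def L(3) l1 l2 k1 kn)
  qed
  show "partials_exist (V_up h W w b \<sigma> k) n y
         \<and> symplectic_pair (V_up h W w b \<sigma> k) k y
         \<and> det (jacobian (V_up h W w b \<sigma> k) n y) = 1
         \<and> partials_exist (V_low h W w b \<sigma> k) n y
         \<and> symplectic_pair (V_low h W w b \<sigma> k) k y
         \<and> det (jacobian (V_low h W w b \<sigma> k) n y) = 1"
    using U(1) U(4) L(1) L(4) Us Ls by blast
qed

end
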